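(* Let $E$ be a Banach lattice, $F\subseteq E$ a norm-closed, order dense ideal of $E$, and $T\in Z(E)$. Let $T_F$ denote the restriction of $T$ to $F$ (an operator on $F$). Then $\|T_F\|=\|T\|$.
   Context: $Z(E)=\{T\in\mathcal L(E):|T|\le\lambda I\text{ for some }\lambda\}$ is the center of $E$; elements of $Z(E)$ are band preserving, so $T$ maps $F$ into $F$. *)

theory Defs
  imports "HOL-Analysis.Analysis"
begin

class banach_lattice = banach + lattice +
  assumes add_left_mono_bl: "x \<le> y \<Longrightarrow> x + z \<le> y + z"
  and scale_nonneg_mono_bl: "0 \<le> x \<Longrightarrow> 0 \<le> c \<Longrightarrow> 0 \<le> c *\<^sub>R x"
  and lattice_norm: "sup x (- x) \<le> sup y (- y) \<Longrightarrow> norm x \<le> norm y"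

definition lat_abs :: "'a::banach_lattice \<Rightarrow> 'a" where
  "lat_abs x = sup x (- x)"

definition lattice_ideal :: "'a::banach_lattice set \<Rightarrow> bool" where
  "lattice_ideal F \<longleftrightarrow> 0 \<in> F \<and> (\<forall>x\<in>F. \<forall>y\<in>F. x + y \<in> F)
     \<and> (\<forall>c. \<forall>x\<in>F. c *\<^sub>R x \<in> F)
     \<and> (\<forall>x\<in>F. \<forall>y. lat_abs y \<le> lat_abs x \<longrightarrow> y \<in> F)"

definition order_dense :: "'a::banach_lattice set \<Rightarrow> bool" where
  "order_dense F \<longleftrightarrow> (\<forall>x. 0 < x \<longrightarrow> (\<exists>y\<in>F. 0 < y \<and> y \<le> x))"

text \<open>The center Z(E): bounded linear operators T with |T| \<le> \<lambda> I, i.e.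
  |T x| \<le> \<lambda> |x| for all x.\<close>
definition center :: "('a::banach_lattice \<Rightarrow> 'a) set" where
  "center = {T. bounded_linear T \<and> (\<exists>c::real. \<forall>x. lat_abs (T x) \<le> c *\<^sub>R lat_abs x)}"

definition restr_onorm :: "('a::real_normed_vector \<Rightarrow> 'b::real_normed_vector) \<Rightarrow> 'a set \<Rightarrow> real" where
  "restr_onorm T F = (SUP x\<in>F. norm (T x) / norm x)"

end

theory Submission
  imports Defs "HOL-Library.Lattice_Algebras"
begin

context banach_lattice begin
subclass ordered_ab_group_add
proof
  fix a b c :: 'a assume "a \<le> b"
  then have "a + c \<le> b + c" by (rule add_left_mono_bl)
  then show "c + a \<le> c + b" by (simp only: add.commute)
qed
subclass lattice_ab_group_add ..
end

lemma bl_scale_mono1: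
  fixes x y :: "'a::banach_lattice"
  assumes "x \<le> y" "0 \<le> a" shows "a *\<^sub>R x \<le> a *\<^sub>R y"
proof -
  have "0 \<le> y - x" using assms by simp
  then have "0 \<le> a *\<^sub>R (y - x)" using assms(2) by (rule scale_nonneg_mono_bl)
  then show ?thesis by (simp add: scaleR_diff_right)
qed

lemma bl_scale_mono2:
  fixes x :: "'a::banach_lattice"
  assumes "a \<le> b" "0 \<le> x" shows "a *\<^sub>R x \<le> b *\<^sub>R x"
proof -
  have "0 \<le> (b - a) *\<^sub>R x" using scale_nonneg_mono_bl[OF assms(2), of "b - a"] assms(1) by simp
  then show ?thesis by (simp add: scaleR_diff_left)
qed

lemma pos_disj: "inf (sup z 0) (sup (- z) 0) = (0::'a::banach_lattice)"
proof -
  define n where "n = sup (- z) 0"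
  have p: "sup z 0 = z + n" unfolding n_def by (simp add: add_sup_distrib_left sup_commute)
  have "inf (sup z 0) n = inf (z + n) (0 + n)" using p by simp
  also have "\<dots> = inf z 0 + n" by (rule add_inf_distrib_right[symmetric])
  also have "inf z 0 = - n" unfolding n_def by (simp only: inf_eq_neg_sup minus_zero)
  finally have "inf (sup z 0) n = - n + n" .
  then show ?thesis unfolding n_def by (simp only: left_minus)
qed

lemma inf_add_le:
  fixes a p q :: "'a::banach_lattice"
  assumes "0 \<le> a" "0 \<le> p" "0 \<le> q"
  shows "inf a (p + q) \<le> inf a p + inf a q"
proof -
  define m where "m = inf a (p + q)"
  have ma: "m \<le> a" and mpq: "m \<le> p + q" unfolding m_def by auto
  have "m - inf a p = sup (m - a) (m - p)" by (simp add: diff_inf_eq_sup add_sup_distrib_left)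
  also have "\<dots> \<le> q"
  proof (rule sup_least)
    have "m - a \<le> 0" using ma by simp
    then show "m - a \<le> q" using assms(3) by (rule order_trans)
    show "m - p \<le> q" using mpq by (simp add: diff_le_eq add.commute)
  qed
  finally have 1: "m - inf a p \<le> q" .
  have "0 \<le> inf a p" using assms by simp
  then have "m - inf a p \<le> m" by simp
  also have "m \<le> a" by (rule ma)
  finally have "m - inf a p \<le> inf a q" using 1 by simp
  then have "m \<le> inf a q + inf a p" by (simp only: diff_le_eq)
  then show ?thesis unfolding m_def by (simp only: add.commute)
qed

lemma scale_inf:
  fixes p q :: "'a::banach_lattice"
  assumes "0 < s"
  shows "s *\<^sub>R inf p q = inf (s *\<^sub>R p) (s *\<^sub>R q)"
proof (rule antisym)
  show "s *\<^sub>R inf p q \<le> inf (s *\<^sub>R p) (s *\<^sub>R q)"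
    using assms by (intro le_infI bl_scale_mono1) auto
  define X where "X = inf (s *\<^sub>R p) (s *\<^sub>R q)"
  have a1: "X \<le> s *\<^sub>R p" and a2: "X \<le> s *\<^sub>R q" unfolding X_def by auto
  have "inverse s *\<^sub>R X \<le> inverse s *\<^sub>R (s *\<^sub>R p)" by (rule bl_scale_mono1[OF a1]) (use assms in simp)
  moreover have "inverse s *\<^sub>R X \<le> inverse s *\<^sub>R (s *\<^sub>R q)" by (rule bl_scale_mono1[OF a2]) (use assms in simp)
  moreover have "inverse s *\<^sub>R (s *\<^sub>R p) = p" "inverse s *\<^sub>R (s *\<^sub>R q) = q" using assms by auto
  ultimately have "inverse s *\<^sub>R X \<le> p" "inverse s *\<^sub>R X \<le> q" by (simp_all only:)
  then have "inverse s *\<^sub>R X \<le> inf p q" by (rule le_infI)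
  then have "s *\<^sub>R (inverse s *\<^sub>R X) \<le> s *\<^sub>R inf p q" by (rule bl_scale_mono1) (use assms in simp)
  then show "X \<le> s *\<^sub>R inf p q" using assms by simp
qed

lemma scale_sup:
  fixes p q :: "'a::banach_lattice"
  assumes "0 < s"
  shows "s *\<^sub>R sup p q = sup (s *\<^sub>R p) (s *\<^sub>R q)"
proof -
  have "s *\<^sub>R sup p q = - (s *\<^sub>R inf (-p) (-q))" by (simp only: sup_eq_neg_inf scaleR_minus_right)
  also have "\<dots> = - inf (- (s *\<^sub>R p)) (- (s *\<^sub>R q))" using assms by (simp only: scale_inf scaleR_minus_right)
  also have "\<dots> = sup (s *\<^sub>R p) (s *\<^sub>R q)" by (simp only: neg_inf_eq_sup minus_minus)
  finally show ?thesis .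
qed

lemma disj_scale:
  fixes p q :: "'a::banach_lattice"
  assumes "0 \<le> p" "0 \<le> q" "inf p q = 0" "0 \<le> s"
  shows "inf (s *\<^sub>R p) q = 0"
proof -
  define t where "t = max s 1"
  have t: "0 < t" "s \<le> t" "1 \<le> t" unfolding t_def by (simp_all add: max_def)
  have "inf (s *\<^sub>R p) q \<le> inf (t *\<^sub>R p) (t *\<^sub>R q)"
  proof (rule inf_mono)
    show "s *\<^sub>R p \<le> t *\<^sub>R p" using t assms by (intro bl_scale_mono2) auto
    show "q \<le> t *\<^sub>R q" using t(3) assms(2) bl_scale_mono2[of 1 t q] by (metis scaleR_one)
  qed
  also have "\<dots> = 0" using scale_inf[OF t(1), of p q] assms(3) by simp
  finally have le: "inf (s *\<^sub>R p) q \<le> 0" .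
  have "0 \<le> s *\<^sub>R p" using scale_nonneg_mono_bl[OF assms(1) assms(4)] .
  then have "0 \<le> inf (s *\<^sub>R p) q" using assms(2) by (rule le_infI)
  then show ?thesis using le by (rule antisym[rotated])
qed


lemma lat_abs_nonneg: "0 \<le> sup x (- x :: 'a::banach_lattice)"
proof -
  have "x + - x \<le> sup x (- x) + sup x (- x)" by (intro add_mono) auto
  then show ?thesis by simp
qed

lemma pos_decomp: "(z::'a::banach_lattice) = sup z 0 - sup (- z) 0"
proof -
  have "sup z 0 = z + sup (- z) 0" by (simp add: add_sup_distrib_left sup_commute)
  then show ?thesis by (metis add_diff_cancel)
qed

lemma abs_split: "sup x 0 + sup (- x) 0 = sup x (- x :: 'a::banach_lattice)"
proof -
  have "sup x 0 + sup (- x) 0 = sup (sup x 0 + - x) (sup x 0 + 0)" by (rule add_sup_distrib_left)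
  also have "sup x 0 + - x = sup 0 (- x)"
  proof -
    have "sup x 0 + - x = sup (x + - x) (0 + - x)" by (rule add_sup_distrib_right)
    then show ?thesis by simp
  qed
  finally have "sup x 0 + sup (- x) 0 = sup 0 (sup x (- x))" by (simp add: sup_aci)
  then show ?thesis using lat_abs_nonneg[of x] by (simp add: sup_absorb2)
qed

lemma pos_abs: "0 \<le> p \<Longrightarrow> sup p (- p) = (p::'a::banach_lattice)"
  by (rule sup_absorb1) (meson neg_le_0_iff_le order_trans)

lemma pos_norm_mono:
  fixes p q :: "'a::banach_lattice"
  assumes "0 \<le> p" "p \<le> q" shows "norm p \<le> norm q"
proof (rule lattice_norm)
  have "sup p (- p) = p" using assms(1) by (rule pos_abs)
  also have "p \<le> sup q (- q)" using assms(2) by (simp add: le_supI1)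
  finally show "sup p (- p) \<le> sup q (- q)" .
qed

lemma arch:
  fixes a w :: "'a::banach_lattice"
  assumes "0 \<le> a" "0 \<le> w" "\<And>d. d > 0 \<Longrightarrow> w \<le> d *\<^sub>R a"
  shows "w = 0"
proof -
  have n: "norm w \<le> d * norm a" if "d > 0" for d
  proof -
    have "norm w \<le> norm (d *\<^sub>R a)" using assms(2) assms(3)[OF that] by (rule pos_norm_mono)
    then show ?thesis using that by simp
  qed
  have "norm w \<le> 0"
  proof (rule ccontr)
    assume "\<not> norm w \<le> 0"
    then have pw: "norm w > 0" by simp
    define d where "d = norm w / (2 * (norm a + 1))"
    have dp: "d > 0" unfolding d_def using pw norm_ge_zero[of a] by (intro divide_pos_pos) (auto simp: add_nonneg_pos)
    have "norm w \<le> d * norm a" by (rule n[OF dp])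
    also have "d * norm a < norm w"
    proof -
      have q: "norm a / (2 * (norm a + 1)) < 1"
      proof -
        have "0 < norm a + 1" using norm_ge_zero[of a] by linarith
        then have pos: "0 < 2 * (norm a + 1)" by (intro mult_pos_pos) auto
        show ?thesis unfolding pos_divide_less_eq[OF pos] by (simp add: add_nonneg_pos)
      qed
      have "d * norm a = norm w * (norm a / (2 * (norm a + 1)))" unfolding d_def by simp
      also have "\<dots> < norm w * 1" using q pw by (intro mult_strict_left_mono)
      finally show ?thesis by simp
    qed
    finally show False by simp
  qed
  then show ?thesis by simp
qed

lemma band_pres:
  fixes P :: "'a::banach_lattice \<Rightarrow> 'a"
  assumes pos: "\<And>u. 0 \<le> u \<Longrightarrow> 0 \<le> P u"
   and bnd: "\<And>u. 0 \<le> u \<Longrightarrow> P u \<le> c *\<^sub>R u" and c: "0 \<le> c"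
   and l: "0 \<le> l" and u: "0 \<le> u" and lu: "inf l u = 0"
  shows "inf (P l) u = 0"
proof (rule antisym)
  have "inf (P l) u \<le> inf (c *\<^sub>R l) u" using bnd[OF l] by (rule inf_mono) simp
  also have "\<dots> = 0" by (rule disj_scale[OF l u lu c])
  finally show "inf (P l) u \<le> 0" .
  show "0 \<le> inf (P l) u" using pos[OF l] u by simp
qed

lemma K1:
  fixes P :: "'a::banach_lattice \<Rightarrow> 'a"
  assumes lin: "linear P"
   and pos: "\<And>u. 0 \<le> u \<Longrightarrow> 0 \<le> P u"
   and bnd: "\<And>u. 0 \<le> u \<Longrightarrow> P u \<le> c *\<^sub>R u" and c: "0 \<le> c"
   and a: "0 \<le> a" and k: "0 \<le> k" and y0: "0 \<le> y" and yd: "y \<le> sup (P a - k *\<^sub>R a) 0"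
  shows "k *\<^sub>R y \<le> P y"
proof -
  define d where "d = sup (P a - k *\<^sub>R a) 0"
  define e where "e = sup (k *\<^sub>R a - P a) 0"
  have de: "inf d e = 0" unfolding d_def e_def using pos_disj[of "P a - k *\<^sub>R a"] by simp
  have d0: "0 \<le> d" and e0: "0 \<le> e" unfolding d_def e_def by auto
  have ka: "0 \<le> k *\<^sub>R a" using a k by (rule scale_nonneg_mono_bl)
  have "d \<le> P a" unfolding d_def using pos[OF a] ka by (simp add: diff_le_eq le_add_same_cancel1)
  then have yca: "y \<le> c *\<^sub>R a" using yd bnd[OF a] unfolding d_def[symmetric] by (meson order_trans)
  define U where "U s = sup (y - s *\<^sub>R a) 0" for s
  define L where "L s = sup (s *\<^sub>R a - y) 0" for s
  define B where "B s = sup (k *\<^sub>R (s *\<^sub>R a) - P y) 0" for s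
  have U0: "0 \<le> U s" for s unfolding U_def by simp
  have L0: "0 \<le> L s" for s unfolding L_def by simp
  have B0: "0 \<le> B s" for s unfolding B_def by simp
  have UL: "inf (U s) (L s) = 0" for s unfolding U_def L_def using pos_disj[of "y - s *\<^sub>R a"] by simp
  have yUL: "s *\<^sub>R a - y = L s - U s" for s
    unfolding U_def L_def using pos_decomp[of "s *\<^sub>R a - y"] by simp
  have Uy: "U s \<le> y" if "0 \<le> s" for s
  proof -
    have "0 \<le> s *\<^sub>R a" using a that by (rule scale_nonneg_mono_bl)
    then show ?thesis unfolding U_def using y0 by (simp add: diff_le_eq le_add_same_cancel1)
  qed
  have BU: "inf (B s) (U s) = 0" if s: "0 \<le> s" for s
  proof (rule antisym)
    have "k *\<^sub>R (s *\<^sub>R a) - P y = s *\<^sub>R (k *\<^sub>R a - P a) + (s *\<^sub>R P a - P y)"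
      by (simp add: algebra_simps)
    also have "s *\<^sub>R P a - P y = P (s *\<^sub>R a - y)" using lin by (simp add: linear_diff linear_scale)
    also have "\<dots> = P (L s) - P (U s)" using lin by (simp add: yUL linear_diff)
    finally have eq: "k *\<^sub>R (s *\<^sub>R a) - P y = s *\<^sub>R (k *\<^sub>R a - P a) + (P (L s) - P (U s))" .
    have "s *\<^sub>R (k *\<^sub>R a - P a) \<le> s *\<^sub>R e" unfolding e_def using s by (intro bl_scale_mono1) auto
    moreover have "P (L s) - P (U s) \<le> P (L s)" using pos[OF U0] by simp
    ultimately have "k *\<^sub>R (s *\<^sub>R a) - P y \<le> s *\<^sub>R e + P (L s)" unfolding eq by (rule add_mono)
    moreover have "0 \<le> s *\<^sub>R e + P (L s)"
      using scale_nonneg_mono_bl[OF e0 s] pos[OF L0] by simp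
    ultimately have "B s \<le> s *\<^sub>R e + P (L s)" unfolding B_def by simp
    then have "inf (B s) (U s) \<le> inf (U s) (s *\<^sub>R e + P (L s))" by (simp add: le_infI1 inf_commute inf_mono)
    also have "\<dots> \<le> inf (U s) (s *\<^sub>R e) + inf (U s) (P (L s))"
      by (rule inf_add_le[OF U0 scale_nonneg_mono_bl[OF e0 s] pos[OF L0]])
    also have "inf (U s) (s *\<^sub>R e) = 0"
    proof -
      have "inf e (U s) \<le> inf e d" using Uy[OF s] yd unfolding d_def[symmetric] by (meson inf_mono order_refl order_trans)
      then have "inf e (U s) = 0" using de e0 U0[of s] by (simp add: inf_commute antisym)
      then have "inf (s *\<^sub>R e) (U s) = 0" by (rule disj_scale[OF e0 U0 _ s])
      then show ?thesis by (simp add: inf_commute)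
    qed
    also have "inf (U s) (P (L s)) = 0"
      using band_pres[OF pos bnd c L0 U0, of s] UL[of s] by (simp add: inf_commute)
    finally show "inf (B s) (U s) \<le> 0" by simp
    show "0 \<le> inf (B s) (U s)" using B0 U0 by simp
  qed
  have main: "k *\<^sub>R y - P y \<le> k *\<^sub>R (dl *\<^sub>R a)" if dl: "dl > 0" for dl
  proof -
    define g where "g = sup (k *\<^sub>R y - k *\<^sub>R (dl *\<^sub>R a) - P y) 0"
    have g0: "0 \<le> g" unfolding g_def by simp
    have step: "inf g (k *\<^sub>R U (real n * dl)) \<le> inf g (k *\<^sub>R U (real (Suc n) * dl))" for n
    proof -
      define s where "s = real n * dl"
      define t where "t = real (Suc n) * dl"
      have s0: "0 \<le> s" unfolding s_def using dl by simp
      have ts: "t = s + dl" unfolding s_def t_def by (simp add: algebra_simps)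
      have "k *\<^sub>R y - k *\<^sub>R (dl *\<^sub>R a) - P y = k *\<^sub>R (y - t *\<^sub>R a) + (k *\<^sub>R (s *\<^sub>R a) - P y)"
        unfolding ts by (simp add: algebra_simps)
      also have "\<dots> \<le> k *\<^sub>R U t + B s"
        unfolding U_def B_def by (intro add_mono bl_scale_mono1 k) auto
      finally have "g \<le> k *\<^sub>R U t + B s" unfolding g_def
        using scale_nonneg_mono_bl[OF U0 k, of t] B0[of s] by simp
      then have "inf g (k *\<^sub>R U s) \<le> inf (k *\<^sub>R U s) (k *\<^sub>R U t + B s)"
        by (simp add: le_infI1 inf_commute inf_mono)
      also have "\<dots> \<le> inf (k *\<^sub>R U s) (k *\<^sub>R U t) + inf (k *\<^sub>R U s) (B s)"
        by (rule inf_add_le[OF scale_nonneg_mono_bl[OF U0 k] scale_nonneg_mono_bl[OF U0 k] B0])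
      also have "inf (k *\<^sub>R U s) (B s) = 0"
        using disj_scale[OF U0 B0 _ k, of s s] BU[OF s0] by (simp add: inf_commute)
      finally have "inf g (k *\<^sub>R U s) \<le> k *\<^sub>R U t" by (simp add: le_infI2)
      then have "inf g (k *\<^sub>R U s) \<le> inf g (k *\<^sub>R U t)" by simp
      then show ?thesis unfolding s_def t_def .
    qed
    have chain: "inf g (k *\<^sub>R U 0) \<le> inf g (k *\<^sub>R U (real n * dl))" for n
    proof (induction n)
      case 0 then show ?case by simp
    next
      case (Suc n) then show ?case using step[of n] by (rule order_trans)
    qed
    have "U 0 = y" unfolding U_def using y0 by (simp add: sup_absorb1)
    moreover have "g \<le> k *\<^sub>R y"
    proof -
      have "0 \<le> k *\<^sub>R (dl *\<^sub>R a)" using dl k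
        by (intro scale_nonneg_mono_bl[OF scale_nonneg_mono_bl[OF a]]) auto
      moreover have "0 \<le> P y" by (rule pos[OF y0])
      ultimately have "0 \<le> k *\<^sub>R (dl *\<^sub>R a) + P y" by (rule add_nonneg_nonneg)
      then have "k *\<^sub>R y - k *\<^sub>R (dl *\<^sub>R a) - P y \<le> k *\<^sub>R y"
        by (simp only: diff_diff_eq diff_le_eq le_add_same_cancel1)
      then show ?thesis unfolding g_def using scale_nonneg_mono_bl[OF y0 k] by simp
    qed
    ultimately have gU0: "inf g (k *\<^sub>R U 0) = g" by (simp add: inf_absorb1)
    obtain N :: nat where N: "c / dl \<le> real N" by (meson real_arch_simple)
    have "c \<le> real N * dl" using N dl by (simp add: divide_le_eq)
    then have "c *\<^sub>R a \<le> (real N * dl) *\<^sub>R a" using a by (rule bl_scale_mono2)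
    then have "y \<le> (real N * dl) *\<^sub>R a" using yca by simp
    then have "U (real N * dl) = 0" unfolding U_def by (intro sup_absorb2) simp
    then have "g \<le> 0" using chain[of N] gU0 by simp
    then have "k *\<^sub>R y - k *\<^sub>R (dl *\<^sub>R a) - P y \<le> 0" unfolding g_def by simp
    then show ?thesis by (simp add: algebra_simps)
  qed
  show ?thesis
  proof (cases "k = 0")
    case True then show ?thesis using pos[OF y0] by simp
  next
    case False
    then have kp: "k > 0" using k by simp
    define w where "w = sup (k *\<^sub>R y - P y) 0"
    have "w = 0"
    proof (rule arch[OF a])
      show "0 \<le> w" unfolding w_def by simp
      fix dd :: real assume "dd > 0"
      then have "k *\<^sub>R y - P y \<le> k *\<^sub>R ((dd / k) *\<^sub>R a)" using kp by (intro main) simp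
      also have "\<dots> = dd *\<^sub>R a" using kp by simp
      finally show "w \<le> dd *\<^sub>R a" unfolding w_def using scale_nonneg_mono_bl[OF a, of dd] \<open>dd > 0\<close> by simp
    qed
    then have "k *\<^sub>R y - P y \<le> 0" unfolding w_def by (metis sup.cobounded1)
    then show ?thesis by simp
  qed
qed

lemma Mlem:
  fixes S :: "'a::banach_lattice \<Rightarrow> 'a" and F :: "'a set"
  assumes lin: "linear S" and bnd: "\<And>u. sup (S u) (- S u) \<le> c *\<^sub>R sup u (- u)" and c: "0 \<le> c"
   and od: "order_dense F" and Fb: "\<And>y. y \<in> F \<Longrightarrow> norm (S y) \<le> l * norm y" and l: "0 \<le> l"
   and a: "0 \<le> a"
  shows "S a \<le> l *\<^sub>R a"
proof (rule ccontr)
  assume nle: "\<not> S a \<le> l *\<^sub>R a"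
  have posb: "S u \<le> c *\<^sub>R u \<and> - S u \<le> c *\<^sub>R u" if u: "0 \<le> u" for u
  proof -
    have "sup (S u) (- S u) \<le> c *\<^sub>R u" using bnd[of u] unfolding pos_abs[OF u] .
    then show ?thesis by (simp only: le_sup_iff)
  qed
  define P where "P u = S u + c *\<^sub>R u" for u
  have linP: "linear P" unfolding P_def
    by (rule linearI) (simp_all add: linear_add[OF lin] linear_scale[OF lin] scaleR_add_right algebra_simps)
  have posP: "0 \<le> P u" if "0 \<le> u" for u
  proof -
    have "- S u \<le> c *\<^sub>R u" using posb[OF that] by simp
    then have "- S u + S u \<le> c *\<^sub>R u + S u" by (rule add_right_mono)
    then show ?thesis unfolding P_def by (simp add: add.commute)
  qed
  have bndP: "P u \<le> (2 * c) *\<^sub>R u" if "0 \<le> u" for u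
  proof -
    have "P u \<le> c *\<^sub>R u + c *\<^sub>R u" unfolding P_def using posb[OF that] by (intro add_mono) auto
    moreover have "(2 * c) *\<^sub>R u = c *\<^sub>R u + c *\<^sub>R u" by (metis mult_2 scaleR_left_distrib)
    ultimately show ?thesis by (simp only:)
  qed
  have "\<exists>m>l. \<not> S a \<le> m *\<^sub>R a"
  proof (rule ccontr)
    assume "\<not> (\<exists>m>l. \<not> S a \<le> m *\<^sub>R a)"
    then have all: "S a \<le> m *\<^sub>R a" if "m > l" for m using that by blast
    define w where "w = sup (S a - l *\<^sub>R a) 0"
    have "w = 0"
    proof (rule arch[OF a])
      show "0 \<le> w" unfolding w_def by simp
      fix dd :: real assume dd: "dd > 0"
      have "S a \<le> (l + dd) *\<^sub>R a" by (rule all) (use dd in simp)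
      then have "S a \<le> l *\<^sub>R a + dd *\<^sub>R a" by (simp only: scaleR_left_distrib)
      then have "S a - l *\<^sub>R a \<le> dd *\<^sub>R a" by (metis add.commute diff_le_eq)
      then show "w \<le> dd *\<^sub>R a" unfolding w_def using scale_nonneg_mono_bl[OF a, of dd] dd by simp
    qed
    then have "S a - l *\<^sub>R a \<le> 0" unfolding w_def by (metis sup.cobounded1)
    then show False using nle by (metis diff_le_0_iff_le)
  qed
  then obtain m where ml: "m > l" and nm: "\<not> S a \<le> m *\<^sub>R a" by blast
  define d where "d = sup (S a - m *\<^sub>R a) 0"
  have "d \<noteq> 0"
  proof
    assume "d = 0"
    then have "S a - m *\<^sub>R a \<le> 0" unfolding d_def by (metis sup.cobounded1)
    then show False using nm by (metis diff_le_0_iff_le)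
  qed
  moreover have "0 \<le> d" unfolding d_def by simp
  ultimately have "0 < d" by (simp add: order_less_le)
  then obtain y where yF: "y \<in> F" and y0: "0 < y" and yd: "y \<le> d" using od unfolding order_dense_def by blast
  have eqa: "S a - m *\<^sub>R a = P a - (c + m) *\<^sub>R a" unfolding P_def by (simp add: algebra_simps)
  have yd': "y \<le> sup (P a - (c + m) *\<^sub>R a) 0" using yd unfolding d_def eqa .
  have c2: "0 \<le> 2 * c" using c by simp
  have cm: "0 \<le> c + m" using c l ml by simp
  have y0': "0 \<le> y" using y0 by (rule order.strict_implies_order)
  have "(c + m) *\<^sub>R y \<le> P y" by (rule K1[OF linP posP bndP c2 a cm y0' yd'])
  then have "c *\<^sub>R y + m *\<^sub>R y \<le> S y + c *\<^sub>R y" unfolding P_def by (simp only: scaleR_left_distrib)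
  then have my: "m *\<^sub>R y \<le> S y" by (metis add.commute add_le_cancel_left)
  have my0: "0 \<le> m *\<^sub>R y" using y0 ml l by (intro scale_nonneg_mono_bl) auto
  have "norm (m *\<^sub>R y) \<le> norm (S y)"
  proof (rule lattice_norm)
    have "sup (m *\<^sub>R y) (- (m *\<^sub>R y)) = m *\<^sub>R y" by (rule pos_abs[OF my0])
    also have "\<dots> \<le> sup (S y) (- S y)" using my by (simp add: le_supI1)
    finally show "sup (m *\<^sub>R y) (- (m *\<^sub>R y)) \<le> sup (S y) (- S y)" .
  qed
  also have "\<dots> \<le> l * norm y" by (rule Fb[OF yF])
  finally have B: "norm (m *\<^sub>R y) \<le> l * norm y" .
  have m0: "m > 0" using ml l by linarith
  have eq: "norm (m *\<^sub>R y) = m * norm y" by (simp add: abs_of_pos[OF m0])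
  have A: "m * norm y \<le> l * norm y" using B by (simp only: eq)
  have "y \<noteq> 0" using y0 by (metis order_less_irrefl)
  then have "norm y > 0" by simp
  then have "l * norm y < m * norm y" by (rule mult_strict_right_mono[OF ml])
  then show False using A by linarith
qed


lemma neg_abs_eq: "sup (- x) (- (- x)) = sup x (- x :: 'a::banach_lattice)"
  by (simp add: sup_commute)

theorem mainTheorem7:
  fixes F :: "'a::banach_lattice set" and T :: "'a \<Rightarrow> 'a"
  assumes "closed F" and "lattice_ideal F" and "order_dense F"
    and "T \<in> center"
  shows "restr_onorm T F = onorm T"
proof -
  from assms(4) obtain c0 where bl: "bounded_linear T" and c0: "\<And>x. lat_abs (T x) \<le> c0 *\<^sub>R lat_abs x"
    unfolding center_def by blast
  define c where "c = max c0 0"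
  have c: "0 \<le> c" unfolding c_def by simp
  have bnd: "sup (T u) (- T u) \<le> c *\<^sub>R sup u (- u)" for u
  proof -
    have "sup (T u) (- T u) \<le> c0 *\<^sub>R sup u (- u)" using c0[of u] unfolding lat_abs_def .
    also have "\<dots> \<le> c *\<^sub>R sup u (- u)" unfolding c_def by (rule bl_scale_mono2) (auto simp: lat_abs_nonneg)
    finally show ?thesis .
  qed
  have bndn: "sup (- T u) (- (- T u)) \<le> c *\<^sub>R sup u (- u)" for u
    using bnd[of u] by (simp only: neg_abs_eq)
  have lin: "linear T" using bl by (rule bounded_linear.linear)
  have linn: "linear (\<lambda>x. - T x)" using bounded_linear_minus[OF bl] by (rule bounded_linear.linear)
  define l where "l = restr_onorm T F"
  have F0: "0 \<in> F" using assms(2) unfolding lattice_ideal_def by blast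
  have ratio: "norm (T x) / norm x \<le> onorm T" for x by (rule le_onorm[OF bl])
  have bdd: "bdd_above ((\<lambda>x. norm (T x) / norm x) ` F)"
    using ratio by (intro bdd_aboveI2) 
  have upper: "norm (T x) / norm x \<le> l" if "x \<in> F" for x
    unfolding l_def restr_onorm_def using bdd that by (rule cSUP_upper2) simp
  have l0: "0 \<le> l" using upper[OF F0] by simp
  have Fb: "norm (T y) \<le> l * norm y" if "y \<in> F" for y
  proof (cases "y = 0")
    case True then show ?thesis using linear_0[OF lin] by simp
  next
    case False
    then show ?thesis using upper[OF that] by (simp add: pos_divide_le_eq)
  qed
  have Fbn: "norm (- T y) \<le> l * norm y" if "y \<in> F" for y using Fb[OF that] by simp
  have up: "T a \<le> l *\<^sub>R a" if "0 \<le> a" for a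
    by (rule Mlem[OF lin bnd c assms(3) Fb l0 that])
  have lo: "- T a \<le> l *\<^sub>R a" if "0 \<le> a" for a
    by (rule Mlem[OF linn bndn c assms(3) Fbn l0 that])
  have key: "norm (T x) \<le> l * norm x" for x
  proof -
    define xp where "xp = sup x 0"
    define xn where "xn = sup (- x) 0"
    have xp0: "0 \<le> xp" and xn0: "0 \<le> xn" unfolding xp_def xn_def by simp_all
    have xd: "x = xp - xn" unfolding xp_def xn_def by (rule pos_decomp)
    have Tx: "T x = T xp - T xn" unfolding xd by (rule linear_diff[OF lin])
    have s: "xp + xn = sup x (- x)" unfolding xp_def xn_def by (rule abs_split)
    have "T x \<le> l *\<^sub>R xp + l *\<^sub>R xn" unfolding Tx diff_conv_add_uminus
      using up[OF xp0] lo[OF xn0] by (rule add_mono)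
    moreover have "- T x \<le> l *\<^sub>R xn + l *\<^sub>R xp"
    proof -
      have "- T x = T xn + - T xp" unfolding Tx by simp
      also have "\<dots> \<le> l *\<^sub>R xn + l *\<^sub>R xp" using up[OF xn0] lo[OF xp0] by (rule add_mono)
      finally show ?thesis .
    qed
    ultimately have "sup (T x) (- T x) \<le> l *\<^sub>R sup x (- x)"
      unfolding s[symmetric] scaleR_add_right by (simp add: add.commute)
    also have "\<dots> = sup (l *\<^sub>R x) (- (l *\<^sub>R x))"
    proof (cases "l = 0")
      case True then show ?thesis by simp
    next
      case False then have "0 < l" using l0 by simp
      then show ?thesis by (simp add: scale_sup)
    qed
    finally have "norm (T x) \<le> norm (l *\<^sub>R x)" by (rule lattice_norm)
    then show ?thesis using l0 by simp
  qed
  have "onorm T \<le> l" by (rule onorm_bound[OF l0 key])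
  moreover have "l \<le> onorm T"
    unfolding l_def restr_onorm_def using F0 ratio by (intro cSUP_least) auto
  ultimately show ?thesis unfolding l_def by simp
qed

end
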